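(* Let $x$ be a sequence of length $n$, let $i\in\{1,\ldots,n-1\}$ and $y=\tau(x,i)$. Suppose $x[i]<x[i+1]$. Then: (1) $\overleftarrow{b_y}=1$; (2) $\overrightarrow{b_y}=0$ if $\overrightarrow{a_x}=0$, and $\overrightarrow{b_y}=\overrightarrow{a_x}+1$ otherwise; (3) $\overleftarrow{a_y}=0$ if $\overleftarrow{b_x}=0$, and $\overleftarrow{a_y}=\overleftarrow{b_x}-1$ otherwise; (4) $\overrightarrow{a_y}\le i-1$ if $\overrightarrow{a_x}=0$, and $\overrightarrow{a_y}\le\overrightarrow{a_x}$ otherwise.
   Context: Sequences are finite sequences of pairwise distinct integers indexed from $1$. For $1\le i\le n-1$, $\tau(x,i)$ is the sequence obtained from $x$ by exchanging $x[i]$ and $x[i+1]$. The parent-distance table of $x$ is $\overrightarrow{PD}_x[k]=k-\max\{j<k : x[j]<x[k]\}$ if such $j$ exists and $0$ otherwise; the reverse parent-distance table is $\overleftarrow{PD}_x[k]=\min\{j : k<j\le n,\ x[j]<x[k]\}-k$ if such $j$ exists and $0$ otherwise. Notation (for $z\in\{x,y\}$): $\overrightarrow{a_z}=\overrightarrow{PD}_z[i]$, $\overrightarrow{b_z}=\overrightarrow{PD}_z[i+1]$, $\overleftarrow{a_z}=\overleftarrow{PD}_z[i+1]$, $\overleftarrow{b_z}=\overleftarrow{PD}_z[i]$ (in the reverse tables, $a$ refers to position $i+1$ and $b$ to position $i$). *)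

theory Defs
  imports Main
begin

(* Sequences are lists of pairwise distinct integers; positions are 1-indexed:
   the k-th element (1 <= k <= length x) is  x ! (k - 1). *)

definition nth1 :: "int list \<Rightarrow> nat \<Rightarrow> int" where
  "nth1 x k = x ! (k - 1)"

(* tau(x,i): exchange x[i] and x[i+1] (1-indexed), for 1 <= i <= n-1 *)
definition tau :: "int list \<Rightarrow> nat \<Rightarrow> int list" where
  "tau x i = (x[i - 1 := nth1 x (i + 1)])[i := nth1 x i]"

definition fwdPD :: "int list \<Rightarrow> nat \<Rightarrow> nat" where
  "fwdPD x k = (if \<exists>j. 1 \<le> j \<and> j < k \<and> nth1 x j < nth1 x k
                then k - Max {j. 1 \<le> j \<and> j < k \<and> nth1 x j < nth1 x k}
                else 0)"

definition revPD :: "int list \<Rightarrow> nat \<Rightarrow> nat" where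
  "revPD x k = (if \<exists>j. k < j \<and> j \<le> length x \<and> nth1 x j < nth1 x k
                then Min {j. k < j \<and> j \<le> length x \<and> nth1 x j < nth1 x k} - k
                else 0)"

end

theory Submission
  imports Defs
begin

lemma tau_nth1:
  assumes "1 \<le> i" "i + 1 \<le> length x" "1 \<le> j"
  shows "nth1 (tau x i) j = (if j = i then nth1 x (i+1) else if j = i+1 then nth1 x i else nth1 x j)"
  using assms unfolding tau_def nth1_def
  by (cases "j = i"; cases "j = i+1"; auto simp: nth_list_update)

lemma tau_len: "length (tau x i) = length x"
  unfolding tau_def by simp

theorem lemma1:
  fixes x y :: "int list" and n i :: nat
  assumes "distinct x"
    and "length x = n"
    and "1 \<le> i" and "i \<le> n - 1"
    and "y = tau x i"
    and "nth1 x i < nth1 x (i + 1)"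
  shows "revPD y i = 1
       \<and> fwdPD y (i + 1) = (if fwdPD x i = 0 then 0 else fwdPD x i + 1)
       \<and> revPD y (i + 1) = (if revPD x i = 0 then 0 else revPD x i - 1)
       \<and> (if fwdPD x i = 0 then fwdPD y i \<le> i - 1 else fwdPD y i \<le> fwdPD x i)"
proof -
  have n1: "i + 1 \<le> n" using assms by linarith
  have Y: "\<And>j. 1 \<le> j \<Longrightarrow> nth1 y j = (if j = i then nth1 x (i+1) else if j = i+1 then nth1 x i else nth1 x j)"
    using tau_nth1[of i x] assms n1 by auto
  have ly: "length y = n" using assms tau_len by simp
  have yi: "nth1 y i = nth1 x (i+1)" and yi1: "nth1 y (i+1) = nth1 x i" using Y assms by auto
  define A where "A = {j. 1 \<le> j \<and> j < i \<and> nth1 x j < nth1 x i}"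
  define B where "B = {j. 1 \<le> j \<and> j < i \<and> nth1 x j < nth1 x (i+1)}"
  define C where "C = {j. i < j \<and> j \<le> length x \<and> nth1 x j < nth1 x i}"
  have fA: "finite A" "finite B" "finite C" unfolding A_def B_def C_def by auto
  have fx: "fwdPD x i = (if A \<noteq> {} then i - Max A else 0)"
    unfolding fwdPD_def A_def by auto
  have AMax: "A \<noteq> {} \<Longrightarrow> Max A < i \<and> Max A \<ge> 1"
    using fA by (metis (mono_tags, lifting) A_def Max_in mem_Collect_eq)
  have BMax: "B \<noteq> {} \<Longrightarrow> Max B < i \<and> Max B \<ge> 1"
    using fA by (metis (mono_tags, lifting) B_def Max_in mem_Collect_eq)
  have AB: "A \<subseteq> B" unfolding A_def B_def using assms(6) by auto
  have SA: "{j. 1 \<le> j \<and> j < i + 1 \<and> nth1 y j < nth1 y (i+1)} = A"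
    unfolding A_def using Y yi1 assms(6) by (auto simp: less_Suc_eq)
  have SB: "{j. 1 \<le> j \<and> j < i \<and> nth1 y j < nth1 y i} = B"
    unfolding B_def using Y yi by auto
  have SC: "{j. i + 1 < j \<and> j \<le> length y \<and> nth1 y j < nth1 y (i+1)} = C"
    unfolding C_def using Y yi1 assms(6) ly assms(2) assms(3)
    by (auto, metis Suc_eq_plus1 Suc_lessI leD le_less)
  have fy1: "fwdPD y (i+1) = (if A \<noteq> {} then i + 1 - Max A else 0)"
    proof - have e: "\<And>P. {j. P j} \<noteq> {} \<longleftrightarrow> (\<exists>j. P j)" by auto show ?thesis unfolding fwdPD_def SA[symmetric] e by simp qed
  have fy: "fwdPD y i = (if B \<noteq> {} then i - Max B else 0)"
    proof - have e: "\<And>P. {j. P j} \<noteq> {} \<longleftrightarrow> (\<exists>j. P j)" by auto show ?thesis unfolding fwdPD_def SB[symmetric] e by simp qed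
  have rx: "revPD x i = (if C \<noteq> {} then Min C - i else 0)"
    unfolding revPD_def C_def by auto
  have ry1: "revPD y (i+1) = (if C \<noteq> {} then Min C - (i+1) else 0)"
    proof - have e: "\<And>P. {j. P j} \<noteq> {} \<longleftrightarrow> (\<exists>j. P j)" by auto show ?thesis unfolding revPD_def SC[symmetric] e by simp qed
  have CMin: "C \<noteq> {} \<Longrightarrow> Min C > i + 1"
  proof -
    assume "C \<noteq> {}"
    then have "Min C \<in> C" using fA Min_in by blast
    then show ?thesis unfolding C_def using assms(6)
      by (auto, metis Suc_eq_plus1 Suc_lessI not_less_iff_gr_or_eq)
  qed
  have ry: "revPD y i = 1"
  proof -
    have S: "{j. i < j \<and> j \<le> length y \<and> nth1 y j < nth1 y i} \<noteq> {}"
      using yi yi1 assms(6) ly n1 by auto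
    have M: "Min {j. i < j \<and> j \<le> length y \<and> nth1 y j < nth1 y i} = i + 1"
      by (rule Min_eqI) (use yi yi1 assms(6) ly n1 in auto)
    show ?thesis unfolding revPD_def using S M by auto
  qed
  have p4: "if fwdPD x i = 0 then fwdPD y i \<le> i - 1 else fwdPD y i \<le> fwdPD x i"
  proof (cases "A = {}")
    case True
    then show ?thesis using fx fy BMax by (cases "B = {}") auto
  next
    case False
    then have "B \<noteq> {}" using AB by auto
    moreover have "Max A \<le> Max B" using False AB fA by (rule_tac Max_mono) auto
    ultimately show ?thesis using fx fy AMax False by auto
  qed
  have p2: "fwdPD y (i + 1) = (if fwdPD x i = 0 then 0 else fwdPD x i + 1)"
    using fx fy1 AMax by (cases "A = {}") auto
  have p3: "revPD y (i + 1) = (if revPD x i = 0 then 0 else revPD x i - 1)"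
    using rx ry1 CMin by (cases "C = {}") auto
  show ?thesis using ry p2 p3 p4 by blast
qed

end
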